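(* Let $m\ge6$ be even, $t=m/2$, and $s$ an integer with $2\le s\le 2^{t-1}$. Let $E_1,\dots,E_\alpha$ be a partial spread in $\mathbb{F}_2^m$ and $A,B\subseteq\{1,\dots,\alpha\}$ with $|A|=|B|=s$ and $|A\cap B|=1$. Let $f=\sum_{i\in A}f_i$, $g=\sum_{i\in B}f_i$, and $F=\{f,g,f+g\}$. Then for every $\mathbf{h}\in\mathbb{F}_2^m$ and all $f_1,f_2\in F$ with $f_1\neq f_2$, \[\widehat{f_1}(\mathbf{0})+\widehat{f_2}(\mathbf{h})-\widehat{f_1+f_2}(\mathbf{h})\neq 2^m.\]
   Context: A partial spread in $\mathbb{F}_2^m$ ($m=2t$) is a set of subspaces $E_1,\dots,E_\alpha$ of $\mathbb{F}_2^m$, each of dimension $t$, with $E_i\cap E_j=\{\mathbf{0}\}$ for $i\ne j$. $f_i:\mathbb{F}_2^m\to\mathbb{F}_2$ is the indicator function of $E_i\setminus\{\mathbf{0}\}$; sums of Boolean functions are mod 2. For a Boolean function $h$, $\widehat{h}(\mathbf{w})=\sum_{\mathbf{x}\in\mathbb{F}_2^m}(-1)^{h(\mathbf{x})+\mathbf{w}\cdot\mathbf{x}}$ with the standard inner product. *)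

theory Defs
  imports "HOL-Analysis.Analysis" "HOL-Library.Z2"
begin

text \<open>Vectors of F_2^m are modelled as bit^'n with CARD('n) = m;
  subspaces/dimension are those of the F_2-vector space bit^'n.\<close>

definition inner2 :: "bit^'n \<Rightarrow> bit^'n \<Rightarrow> bit" where
  "inner2 w x = (\<Sum>i\<in>UNIV. w $ i * x $ i)"

definition sgn2 :: "bit \<Rightarrow> int" where
  "sgn2 b = (if b = 0 then 1 else -1)"

definition walsh :: "(bit^'n \<Rightarrow> bit) \<Rightarrow> bit^'n \<Rightarrow> int" where
  "walsh h w = (\<Sum>x\<in>UNIV. sgn2 (h x + inner2 w x))"

definition partial_spread :: "nat \<Rightarrow> nat \<Rightarrow> (nat \<Rightarrow> (bit^'n) set) \<Rightarrow> bool" where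
  "partial_spread t \<alpha> E \<longleftrightarrow>
     (\<forall>i\<in>{1..\<alpha>}. vec.subspace (E i) \<and> vec.dim (E i) = t) \<and>
     (\<forall>i\<in>{1..\<alpha>}. \<forall>j\<in>{1..\<alpha>}. i \<noteq> j \<longrightarrow> E i \<inter> E j = {0})"

definition spread_ind :: "(bit^'n) set \<Rightarrow> bit^'n \<Rightarrow> bit" where
  "spread_ind S x = (if x \<in> S - {0} then 1 else 0)"

end

theory Submission
  imports Defs
begin

lemma bit_UNIV: "(UNIV :: bit set) = {0, 1}"
  by auto

lemma card_bit: "CARD(bit) = 2"
  by (simp add: bit_UNIV)

lemma card_bitvec: "card (UNIV :: (bit^'n) set) = 2 ^ CARD('n)"
  by (simp only: CARD_vec card_bit)

lemma finite_bitvec: "finite (UNIV :: (bit^'n) set)"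
  using card_bitvec[where 'n='n] by (metis card_ge_0_finite zero_less_numeral zero_less_power)

lemma inner2_zero: "inner2 0 x = 0"
  by (simp add: inner2_def)

lemma inner2_add: "inner2 h (x + y) = inner2 h x + inner2 h y"
  unfolding inner2_def by (simp only: vector_add_component distrib_left sum.distrib)

lemma walsh_key:
  fixes a b :: "bit^'n \<Rightarrow> bit" and h :: "bit^'n"
  assumes eq: "walsh a 0 + walsh b h - walsh (\<lambda>x. a x + b x) h = 2 ^ CARD('n)"
    and ax: "a x = 1" and bx: "b x = 1"
  shows "inner2 h x = 1"
proof (rule ccontr)
  assume nx: "inner2 h x \<noteq> 1"
  define T where "T x = sgn2 (a x) + sgn2 (b x + inner2 h x) - sgn2 (a x + b x + inner2 h x)" for x
  have sumT: "sum T UNIV = walsh a 0 + walsh b h - walsh (\<lambda>x. a x + b x) h"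
    unfolding T_def walsh_def by (simp only: inner2_zero add_0_right sum.distrib sum_subtractf add.assoc)
  have le: "T y \<le> 1" for y
    unfolding T_def sgn2_def
    by (cases "a y"; cases "b y"; cases "inner2 h y"; simp)
  have lt: "T x < 1"
    using nx unfolding T_def sgn2_def by (simp add: ax bx)
  have "sum T UNIV < sum (\<lambda>_. 1) (UNIV :: (bit^'n) set)"
    by (rule sum_strict_mono_ex1[OF finite_bitvec]) (use le lt in auto)
  also have "\<dots> = 2 ^ CARD('n)" by (simp add: card_bitvec del: CARD_vec)
  finally show False using sumT eq by simp
qed

lemma neg_bitvec: "- (y :: bit^'n) = y"
  by (simp add: vec_eq_iff)

lemma subspace_not_all_one:
  fixes E :: "(bit^'n) set"
  assumes sub: "vec.subspace E" and d: "vec.dim E \<ge> 2"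
    and all: "\<forall>x\<in>E - {0}. inner2 h x = 1"
  shows False
proof -
  have "\<exists>x. x \<in> E \<and> x \<noteq> 0"
  proof (rule ccontr)
    assume "\<not> ?thesis"
    then have "E \<subseteq> vec.span {}" by (auto simp: vec.span_empty)
    then have "vec.dim E \<le> card ({} :: (bit^'n) set)" by (rule vec.dim_le_card) simp
    then show False using d by (subst (asm) card.empty) linarith
  qed
  then obtain x where x: "x \<in> E" "x \<noteq> 0" by blast
  have "\<exists>y. y \<in> E \<and> y \<noteq> 0 \<and> y \<noteq> x"
  proof (rule ccontr)
    assume "\<not> ?thesis"
    then have "E \<subseteq> vec.span {x}"
      by (auto intro: vec.span_zero vec.span_base)
    then have "vec.dim E \<le> card {x}" by (intro vec.dim_le_card) auto
    then show False using d by simp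
  qed
  then obtain y where y: "y \<in> E" "y \<noteq> 0" "y \<noteq> x" by blast
  have xy: "x + y \<in> E" using sub x y by (simp add: vec.subspace_add)
  have "x + y \<noteq> 0"
  proof
    assume "x + y = 0"
    then have "x = - y" by (simp add: eq_neg_iff_add_eq_0)
    then show False using y neg_bitvec by metis
  qed
  then have "inner2 h (x + y) = 1" using all xy by auto
  moreover have "inner2 h x = 1" "inner2 h y = 1" using all x y by auto
  ultimately show False by (simp add: inner2_add)
qed

lemma spread_val:
  fixes E :: "nat \<Rightarrow> (bit^'n) set"
  assumes ps: "partial_spread t \<alpha> E" and A: "A \<subseteq> {1..\<alpha>}" and i: "i \<in> {1..\<alpha>}"
    and x: "x \<in> E i - {0}"
  shows "(\<Sum>j\<in>A. spread_ind (E j) x) = (if i \<in> A then 1 else 0)"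
proof -
  have fin: "finite A" using A finite_subset by blast
  have "(\<Sum>j\<in>A. spread_ind (E j) x) = (\<Sum>j\<in>A. if j = i then 1 else 0)"
  proof (rule sum.cong)
    fix j assume j: "j \<in> A"
    show "spread_ind (E j) x = (if j = i then 1 else 0)"
    proof (cases "j = i")
      case True then show ?thesis using x by (simp add: spread_ind_def)
    next
      case False
      then have "E i \<inter> E j = {0}" using ps i j A unfolding partial_spread_def by blast
      then have "x \<notin> E j" using x by blast
      then show ?thesis using False by (simp add: spread_ind_def)
    qed
  qed simp
  also have "\<dots> = (if i \<in> A then 1 else 0)" using fin by (simp add: sum.delta')
  finally show ?thesis .
qed

theorem lemma5:
  fixes m t s \<alpha> :: nat and E :: "nat \<Rightarrow> (bit^'n) set" and A B :: "nat set"
  assumes "CARD('n) = m" and "m \<ge> 6" and "even m" and "t = m div 2"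
    and "2 \<le> s" and "s \<le> 2 ^ (t - 1)"
    and "partial_spread t \<alpha> E"
    and "A \<subseteq> {1..\<alpha>}" and "B \<subseteq> {1..\<alpha>}"
    and "card A = s" and "card B = s" and "card (A \<inter> B) = 1"
  shows "let f = (\<lambda>x. \<Sum>i\<in>A. spread_ind (E i) x);
             g = (\<lambda>x. \<Sum>i\<in>B. spread_ind (E i) x);
             F = {f, g, (\<lambda>x. f x + g x)}
         in \<forall>h :: bit^'n. \<forall>f1\<in>F. \<forall>f2\<in>F. f1 \<noteq> f2 \<longrightarrow>
              walsh f1 0 + walsh f2 h - walsh (\<lambda>x. f1 x + f2 x) h \<noteq> 2 ^ m"
proof -
  note ps = assms(7)
  define f where "f = (\<lambda>x. \<Sum>i\<in>A. spread_ind (E i) x)"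
  define g where "g = (\<lambda>x. \<Sum>i\<in>B. spread_ind (E i) x)"
  have finA: "finite A" using assms(8) finite_subset by blast
  have finB: "finite B" using assms(9) finite_subset by blast
  obtain c where c: "A \<inter> B = {c}" using assms(12) card_1_singletonE by blast
  have "\<exists>a0. a0 \<in> A \<and> a0 \<notin> B"
  proof (rule ccontr)
    assume "\<not> ?thesis"
    then have "A \<inter> B = A" by blast
    then show False using assms(5,10,12) by simp
  qed
  then obtain a0 where a0: "a0 \<in> A" "a0 \<notin> B" by blast
  have "\<exists>b0. b0 \<in> B \<and> b0 \<notin> A"
  proof (rule ccontr)
    assume "\<not> ?thesis"
    then have "A \<inter> B = B" by blast
    then have "card (A \<inter> B) = s" using assms(11) by simp
    then show False using assms(5,12) by simp
  qed
  then obtain b0 where b0: "b0 \<in> B" "b0 \<notin> A" by blast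
  have fv: "f x = (if i \<in> A then 1 else 0)" "g x = (if i \<in> B then 1 else 0)"
    if "i \<in> {1..\<alpha>}" "x \<in> E i - {0}" for i x
    using spread_val[OF ps assms(8) that] spread_val[OF ps assms(9) that]
    by (simp_all add: f_def g_def)
  have dimok: "vec.subspace (E i) \<and> vec.dim (E i) \<ge> 2" if "i \<in> {1..\<alpha>}" for i
    using ps that assms(2,4) unfolding partial_spread_def by auto
  have key: False
    if i: "i \<in> {1..\<alpha>}" and P1: "\<forall>x\<in>E i - {0}. p x = 1 \<and> q x = 1"
      and eq: "walsh p 0 + walsh q h - walsh (\<lambda>x. p x + q x) h = 2 ^ m"
    for p q :: "bit^'n \<Rightarrow> bit" and i h
  proof -
    have "\<forall>x\<in>E i - {0}. inner2 h x = 1"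
      using walsh_key[of p q h] eq P1 assms(1) by auto
    then show False using subspace_not_all_one dimok[OF i] by blast
  qed
  have cA: "c \<in> {1..\<alpha>}" using c assms(8) by blast
  have aA: "a0 \<in> {1..\<alpha>}" using a0 assms(8) by blast
  have bA: "b0 \<in> {1..\<alpha>}" using b0 assms(9) by blast
  have cc: "c \<in> A" "c \<in> B" using c by auto
  have Pfg: "\<forall>x\<in>E c - {0}. f x = 1 \<and> g x = 1" using fv[OF cA] cc by auto
  have Pfh: "\<forall>x\<in>E a0 - {0}. f x = 1 \<and> f x + g x = 1" using fv[OF aA] a0 by auto
  have Pgh: "\<forall>x\<in>E b0 - {0}. g x = 1 \<and> f x + g x = 1" using fv[OF bA] b0 by auto
  have Pgf: "\<forall>x\<in>E c - {0}. g x = 1 \<and> f x = 1" using Pfg by blast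
  have Phf: "\<forall>x\<in>E a0 - {0}. f x + g x = 1 \<and> f x = 1" using Pfh by blast
  have Phg: "\<forall>x\<in>E b0 - {0}. f x + g x = 1 \<and> g x = 1" using Pgh by blast
  show ?thesis
    unfolding Let_def f_def[symmetric] g_def[symmetric]
  proof (intro allI ballI impI notI)
    fix h f1 f2
    assume f1: "f1 \<in> {f, g, \<lambda>x. f x + g x}" and f2: "f2 \<in> {f, g, \<lambda>x. f x + g x}"
      and ne: "f1 \<noteq> f2"
      and eq: "walsh f1 0 + walsh f2 h - walsh (\<lambda>x. f1 x + f2 x) h = 2 ^ m"
    from f1 f2 ne show False
    proof (elim insertE emptyE; simp only:)
      assume "f1 = f" "f2 = g" then show False using key[OF cA Pfg] eq by (simp del: add_bit_eq_xor)
    next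
      assume "f1 = g" "f2 = f" then show False using key[OF cA Pgf] eq by (simp del: add_bit_eq_xor)
    next
      assume "f1 = f" "f2 = (\<lambda>x. f x + g x)" then show False using key[OF aA Pfh] eq by (simp del: add_bit_eq_xor)
    next
      assume "f1 = (\<lambda>x. f x + g x)" "f2 = f" then show False using key[OF aA Phf] eq by (simp del: add_bit_eq_xor)
    next
      assume "f1 = g" "f2 = (\<lambda>x. f x + g x)" then show False using key[OF bA Pgh] eq by (simp del: add_bit_eq_xor)
    next
      assume "f1 = (\<lambda>x. f x + g x)" "f2 = g" then show False using key[OF bA Phg] eq by (simp del: add_bit_eq_xor)
    qed auto
  qed
qed

end
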